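(* ${\bf KB^\boxdot}$ is strongly complete with respect to the class of quasi-symmetric bimodal frames: every ${\bf KB^\boxdot}$-consistent set of $\mathcal{L}(\boxdot)$-formulas is satisfiable at some state of some quasi-symmetric bimodal model.
   Context: Fix a nonempty set $\mathbf{P}$ of propositional variables. A bimodal model is $\langle S,R_1,R_2,V\rangle$ with $S$ nonempty, $R_1,R_2\subseteq S\times S$, $V:\mathbf{P}\to\mathcal{P}(S)$. It is quasi-symmetric if for all $i,j\in\{1,2\}$ and all $s,t\in S$ such that $tR_ju$ for some $u\in S$, $sR_it$ implies $tR_is$. $\mathcal{L}(\boxdot):\ \phi::=p\mid\neg\phi\mid(\phi\wedge\phi)\mid\boxdot\phi$. Truth: $\mathcal{M},s\vDash\boxdot\phi$ iff for all $t,u$ with $sR_1t$ and $sR_2u$, ($\mathcal{M},t\vDash\phi\iff\mathcal{M},u\vDash\phi$); atoms and Booleans as usual. ${\bf K^\boxdot}$ has axioms: all instances of propositional tautologies; $\boxdot\top$; $\boxdot\phi\leftrightarrow\boxdot\neg\phi$; $\boxdot\phi\wedge\boxdot\psi\to\boxdot(\phi\wedge\psi)$; $\boxdot\phi\to\boxdot(\phi\vee\psi)\vee\boxdot(\neg\phi\vee\chi)$; rules: modus ponens and RE: from $\phi\leftrightarrow\psi$ infer $\boxdot\phi\leftrightarrow\boxdot\psi$. ${\bf KB^\boxdot}$ is ${\bf K^\boxdot}$ plus the axiom schema $\phi\to\boxdot((\boxdot\phi\wedge\boxdot(\phi\to\psi)\wedge\neg\boxdot\psi)\to\chi)$. A set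 is consistent if no finite conjunction of its members has a provable negation. *)

theory Defs
  imports Main
begin

datatype 'p fm = Atom 'p | Neg "'p fm" | Conj "'p fm" "'p fm" | Dot "'p fm"

definition Disj :: "'p fm \<Rightarrow> 'p fm \<Rightarrow> 'p fm" where
  "Disj a b = Neg (Conj (Neg a) (Neg b))"

definition Imp :: "'p fm \<Rightarrow> 'p fm \<Rightarrow> 'p fm" where
  "Imp a b = Neg (Conj a (Neg b))"

definition Iff :: "'p fm \<Rightarrow> 'p fm \<Rightarrow> 'p fm" where
  "Iff a b = Conj (Imp a b) (Imp b a)"

text \<open>Top is defined as the negation of a contradiction built from a fixed
  (arbitrary) propositional variable; the set of variables is the type 'p,
  which is nonempty.\<close>
definition Top :: "'p fm" where
  "Top = Neg (Conj (Atom (SOME p. True)) (Neg (Atom (SOME p. True))))"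

fun tv :: "('p fm \<Rightarrow> bool) \<Rightarrow> 'p fm \<Rightarrow> bool" where
  "tv g (Atom p) = g (Atom p)"
| "tv g (Neg a) = (\<not> tv g a)"
| "tv g (Conj a b) = (tv g a \<and> tv g b)"
| "tv g (Dot a) = g (Dot a)"

definition tautology :: "'p fm \<Rightarrow> bool" where
  "tautology \<phi> \<longleftrightarrow> (\<forall>g. tv g \<phi>)"

inductive KBdot :: "'p fm \<Rightarrow> bool" where
  Taut: "tautology \<phi> \<Longrightarrow> KBdot \<phi>"
| DotTop: "KBdot (Dot Top)"
| DotNeg: "KBdot (Iff (Dot \<phi>) (Dot (Neg \<phi>)))"
| DotConj: "KBdot (Imp (Conj (Dot \<phi>) (Dot \<psi>)) (Dot (Conj \<phi> \<psi>)))"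
| DotDisj: "KBdot (Imp (Dot \<phi>) (Disj (Dot (Disj \<phi> \<psi>)) (Dot (Disj (Neg \<phi>) \<chi>))))"
| AxB: "KBdot (Imp \<phi> (Dot (Imp (Conj (Conj (Dot \<phi>) (Dot (Imp \<phi> \<psi>))) (Neg (Dot \<psi>))) \<chi>)))"
| MP: "KBdot (Imp \<phi> \<psi>) \<Longrightarrow> KBdot \<phi> \<Longrightarrow> KBdot \<psi>"
| RE: "KBdot (Iff \<phi> \<psi>) \<Longrightarrow> KBdot (Iff (Dot \<phi>) (Dot \<psi>))"

definition conjs :: "'p fm list \<Rightarrow> 'p fm" where
  "conjs xs = foldr Conj xs Top"

definition KBdot_consistent :: "'p fm set \<Rightarrow> bool" where
  "KBdot_consistent \<Gamma> \<longleftrightarrow> (\<forall>xs. set xs \<subseteq> \<Gamma> \<longrightarrow> \<not> KBdot (Neg (conjs xs)))"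

definition bimodal_model :: "'w set \<Rightarrow> ('w \<times> 'w) set \<Rightarrow> ('w \<times> 'w) set \<Rightarrow> ('p \<Rightarrow> 'w set) \<Rightarrow> bool" where
  "bimodal_model S R1 R2 V \<longleftrightarrow> S \<noteq> {} \<and> R1 \<subseteq> S \<times> S \<and> R2 \<subseteq> S \<times> S \<and> (\<forall>p. V p \<subseteq> S)"

definition quasi_symmetric :: "'w set \<Rightarrow> ('w \<times> 'w) set \<Rightarrow> ('w \<times> 'w) set \<Rightarrow> bool" where
  "quasi_symmetric S R1 R2 \<longleftrightarrow>
     (\<forall>Ri \<in> {R1, R2}. \<forall>Rj \<in> {R1, R2}. \<forall>s\<in>S. \<forall>t\<in>S.
        (\<exists>u\<in>S. (t, u) \<in> Rj) \<longrightarrow> (s, t) \<in> Ri \<longrightarrow> (t, s) \<in> Ri)"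

fun sat :: "('w \<times> 'w) set \<Rightarrow> ('w \<times> 'w) set \<Rightarrow> ('p \<Rightarrow> 'w set) \<Rightarrow> 'w \<Rightarrow> 'p fm \<Rightarrow> bool" where
  "sat R1 R2 V s (Atom p) = (s \<in> V p)"
| "sat R1 R2 V s (Neg a) = (\<not> sat R1 R2 V s a)"
| "sat R1 R2 V s (Conj a b) = (sat R1 R2 V s a \<and> sat R1 R2 V s b)"
| "sat R1 R2 V s (Dot a) =
     (\<forall>t u. (s, t) \<in> R1 \<longrightarrow> (s, u) \<in> R2 \<longrightarrow> (sat R1 R2 V t a \<longleftrightarrow> sat R1 R2 V u a))"

end

theory Submission
  imports Defs
begin

lemma tv_Top[simp]: "tv g Top" by (simp add: Top_def)
lemma tv_conjs[simp]: "tv g (conjs xs) \<longleftrightarrow> (\<forall>x\<in>set xs. tv g x)"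
  by (induct xs) (simp_all add: conjs_def)
lemma tv_Imp[simp]: "tv g (Imp a b) = (tv g a \<longrightarrow> tv g b)" by (simp add: Imp_def)
lemma tv_Disj[simp]: "tv g (Disj a b) = (tv g a \<or> tv g b)" by (simp add: Disj_def)
lemma tv_Iff[simp]: "tv g (Iff a b) = (tv g a = tv g b)" by (auto simp add: Iff_def)

lemma KB0: "(\<And>g. tv g a) \<Longrightarrow> KBdot a"
  by (rule Taut) (simp add: tautology_def)
lemma KB1: "KBdot a \<Longrightarrow> (\<And>g. tv g a \<Longrightarrow> tv g b) \<Longrightarrow> KBdot b"
  by (rule MP[of a b]) (auto intro: KB0)
lemma KB2: "KBdot a \<Longrightarrow> KBdot b \<Longrightarrow> (\<And>g. tv g a \<Longrightarrow> tv g b \<Longrightarrow> tv g c) \<Longrightarrow> KBdot c"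
  by (rule MP[of b c], rule MP[of a "Imp b c"]) (auto intro: KB0)

definition mcs :: "'p fm set \<Rightarrow> bool" where
  "mcs M \<longleftrightarrow> KBdot_consistent M \<and> (\<forall>\<phi>. KBdot_consistent (insert \<phi> M) \<longrightarrow> \<phi> \<in> M)"

lemma mcs_incons: "mcs M \<Longrightarrow> set xs \<subseteq> M \<Longrightarrow> KBdot (Neg (conjs xs)) \<Longrightarrow> False"
  unfolding mcs_def KBdot_consistent_def by blast

lemma mcs_thm: assumes "mcs M" "KBdot \<phi>" shows "\<phi> \<in> M"
proof -
  have "KBdot_consistent (insert \<phi> M)"
    unfolding KBdot_consistent_def
  proof (intro allI impI notI)
    fix xs assume xs: "set xs \<subseteq> insert \<phi> M" and k: "KBdot (Neg (conjs xs))"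
    let ?ys = "filter (\<lambda>x. x \<noteq> \<phi>) xs"
    have "set ?ys \<subseteq> M" using xs by auto
    moreover have "KBdot (Neg (conjs ?ys))"
      by (rule KB2[OF assms(2) k]) auto
    ultimately show False using mcs_incons[OF assms(1)] by blast
  qed
  then show ?thesis using assms(1) unfolding mcs_def by blast
qed

lemma mcs_neg: assumes "mcs M" shows "Neg \<phi> \<in> M \<longleftrightarrow> \<phi> \<notin> M"
proof
  assume "Neg \<phi> \<in> M" then show "\<phi> \<notin> M"
    using mcs_incons[OF assms, of "[\<phi>, Neg \<phi>]"] KB0[of "Neg (conjs [\<phi>, Neg \<phi>])"] by auto
next
  assume n: "\<phi> \<notin> M"
  show "Neg \<phi> \<in> M"
  proof (rule ccontr)
    assume n2: "Neg \<phi> \<notin> M"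
    from n assms obtain xs1 where x1: "set xs1 \<subseteq> insert \<phi> M" "KBdot (Neg (conjs xs1))"
      unfolding mcs_def KBdot_consistent_def by blast
    from n2 assms obtain xs2 where x2: "set xs2 \<subseteq> insert (Neg \<phi>) M" "KBdot (Neg (conjs xs2))"
      unfolding mcs_def KBdot_consistent_def by blast
    let ?zs = "filter (\<lambda>x. x \<noteq> \<phi>) xs1 @ filter (\<lambda>x. x \<noteq> Neg \<phi>) xs2"
    have "set ?zs \<subseteq> M" using x1 x2 by auto
    moreover have "KBdot (Neg (conjs ?zs))"
    proof (rule KB2[OF x1(2) x2(2)])
      fix g assume a: "tv g (Neg (conjs xs1))" "tv g (Neg (conjs xs2))"
      show "tv g (Neg (conjs ?zs))"
      proof (cases "tv g \<phi>")
        case True then show ?thesis using a(1) by auto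
      next
        case False then show ?thesis using a(2) by auto
      qed
    qed
    ultimately show False using mcs_incons[OF assms] by blast
  qed
qed

lemma mcs_conj: assumes "mcs M" shows "Conj a b \<in> M \<longleftrightarrow> a \<in> M \<and> b \<in> M"
proof
  assume c: "Conj a b \<in> M"
  show "a \<in> M \<and> b \<in> M"
  proof (rule ccontr)
    assume "\<not> (a \<in> M \<and> b \<in> M)"
    then have "Neg a \<in> M \<or> Neg b \<in> M" using mcs_neg[OF assms] by blast
    then show False
    proof
      assume "Neg a \<in> M" then show False
        using mcs_incons[OF assms, of "[Conj a b, Neg a]"] c KB0[of "Neg (conjs [Conj a b, Neg a])"] by auto
    next
      assume "Neg b \<in> M" then show False
        using mcs_incons[OF assms, of "[Conj a b, Neg b]"] c KB0[of "Neg (conjs [Conj a b, Neg b])"] by auto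
    qed
  qed
next
  assume ab: "a \<in> M \<and> b \<in> M"
  show "Conj a b \<in> M"
  proof (rule ccontr)
    assume "Conj a b \<notin> M"
    then have "Neg (Conj a b) \<in> M" using mcs_neg[OF assms] by blast
    then show False using ab
        mcs_incons[OF assms, of "[a, b, Neg (Conj a b)]"] KB0[of "Neg (conjs [a, b, Neg (Conj a b)])"] by auto
  qed
qed

lemma mcs_imp: "mcs M \<Longrightarrow> Imp a b \<in> M \<Longrightarrow> a \<in> M \<Longrightarrow> b \<in> M"
  unfolding Imp_def using mcs_neg mcs_conj by blast

lemma mcs_mp: "mcs M \<Longrightarrow> KBdot (Imp a b) \<Longrightarrow> a \<in> M \<Longrightarrow> b \<in> M"
  using mcs_imp mcs_thm by blast

lemma mcs_iff: "mcs M \<Longrightarrow> KBdot (Iff a b) \<Longrightarrow> a \<in> M \<longleftrightarrow> b \<in> M"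
  unfolding Iff_def using mcs_thm mcs_conj mcs_imp by blast

lemma mcs_disj: "mcs M \<Longrightarrow> Disj a b \<in> M \<longleftrightarrow> a \<in> M \<or> b \<in> M"
  unfolding Disj_def using mcs_neg mcs_conj by blast

lemma eqv: "mcs M \<Longrightarrow> (\<And>g. tv g a = tv g b) \<Longrightarrow> Dot a \<in> M \<longleftrightarrow> Dot b \<in> M"
proof -
  assume M: "mcs M" and e: "\<And>g. tv g a = tv g b"
  have "KBdot (Iff a b)" by (rule KB0) (simp add: e)
  then have "KBdot (Iff (Dot a) (Dot b))" by (rule RE)
  then show ?thesis using mcs_iff[OF M] by blast
qed

lemma T2: "mcs M \<Longrightarrow> Dot (Neg a) \<in> M \<longleftrightarrow> Dot a \<in> M"
  using mcs_iff[OF _ DotNeg] by blast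

lemma T3: "mcs M \<Longrightarrow> Dot a \<in> M \<Longrightarrow> Dot b \<in> M \<Longrightarrow> Dot (Conj a b) \<in> M"
  using mcs_imp[OF _ mcs_thm[OF _ DotConj]] mcs_conj by blast

lemma T4: "mcs M \<Longrightarrow> Dot a \<in> M \<Longrightarrow> Dot (Disj a b) \<in> M \<or> Dot (Disj (Neg a) c) \<in> M"
  using mcs_imp[OF _ mcs_thm[OF _ DotDisj]] mcs_disj by blast

lemma T5: "mcs M \<Longrightarrow> a \<in> M \<Longrightarrow>
   Dot (Imp (Conj (Conj (Dot a) (Dot (Imp a b))) (Neg (Dot b))) c) \<in> M"
  using mcs_imp[OF _ mcs_thm[OF _ AxB]] by blast

lemma T6: "mcs M \<Longrightarrow> Dot Top \<in> M"
  using mcs_thm[OF _ DotTop] by blast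

lemma dot_disj: "mcs M \<Longrightarrow> Dot a \<in> M \<Longrightarrow> Dot b \<in> M \<Longrightarrow> Dot (Disj a b) \<in> M"
  unfolding Disj_def using T2 T3 by blast

lemma switch:
  assumes M: "mcs M" and "Dot \<chi> \<notin> M" "Dot \<psi> \<in> M" "Dot (Imp \<chi> \<psi>) \<in> M"
  shows "Dot (Imp \<phi> \<psi>) \<in> M"
proof -
  from T4[OF M assms(3), of "Neg \<phi>" \<chi>]
  have "Dot (Disj \<psi> (Neg \<phi>)) \<in> M \<or> Dot (Disj (Neg \<psi>) \<chi>) \<in> M" .
  then show ?thesis
  proof
    assume "Dot (Disj \<psi> (Neg \<phi>)) \<in> M" thus ?thesis
      using eqv[OF M, of "Disj \<psi> (Neg \<phi>)" "Imp \<phi> \<psi>"] by auto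
  next
    assume h: "Dot (Disj (Neg \<psi>) \<chi>) \<in> M"
    let ?E = "Conj (Imp \<chi> \<psi>) (Disj (Neg \<psi>) \<chi>)"
    have E: "Dot ?E \<in> M" using T3[OF M assms(4) h] .
    have 1: "Dot (Conj \<psi> ?E) \<in> M" using T3[OF M assms(3) E] .
    have 2: "Dot (Conj (Neg \<psi>) (Neg ?E)) \<in> M" using T3[OF M] T2[OF M] assms(3) E by blast
    have "Dot (Disj (Conj \<psi> ?E) (Conj (Neg \<psi>) (Neg ?E))) \<in> M" using dot_disj[OF M 1 2] .
    then have "Dot \<chi> \<in> M" using eqv[OF M, of "Disj (Conj \<psi> ?E) (Conj (Neg \<psi>) (Neg ?E))" \<chi>] by auto
    with assms(2) show ?thesis by blast
  qed
qed

definition Bs :: "'p fm set \<Rightarrow> 'p fm set" where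
  "Bs M = {\<psi>. \<exists>\<chi>. Dot \<chi> \<notin> M \<and> Dot \<psi> \<in> M \<and> Dot (Imp \<chi> \<psi>) \<in> M}"

definition Rc :: "'p fm set \<Rightarrow> 'p fm set \<Rightarrow> bool" where
  "Rc M N \<longleftrightarrow> (\<exists>\<chi>. Dot \<chi> \<notin> M) \<and> Bs M \<subseteq> N"

lemma B_conjs: assumes M: "mcs M" and "Dot \<phi> \<notin> M"
  shows "set ys \<subseteq> Bs M \<Longrightarrow> Dot (conjs ys) \<in> M \<and> Dot (Imp \<phi> (conjs ys)) \<in> M"
proof (induct ys)
  case Nil
  show ?case using T6[OF M] eqv[OF M, of "Imp \<phi> Top" Top] by (simp add: conjs_def)
next
  case (Cons y ys)
  then have IH: "Dot (conjs ys) \<in> M" "Dot (Imp \<phi> (conjs ys)) \<in> M" by auto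
  from Cons obtain \<chi> where c: "Dot \<chi> \<notin> M" "Dot y \<in> M" "Dot (Imp \<chi> y) \<in> M"
    unfolding Bs_def by auto
  have y: "Dot (Imp \<phi> y) \<in> M" using switch[OF M c] .
  have "Dot (Conj y (conjs ys)) \<in> M" using T3[OF M c(2) IH(1)] .
  moreover have "Dot (Conj (Imp \<phi> y) (Imp \<phi> (conjs ys))) \<in> M" using T3[OF M y IH(2)] .
  then have "Dot (Imp \<phi> (Conj y (conjs ys))) \<in> M"
    using eqv[OF M, of "Conj (Imp \<phi> y) (Imp \<phi> (conjs ys))" "Imp \<phi> (Conj y (conjs ys))"] by auto
  ultimately show ?case by (simp add: conjs_def)
qed

lemma lindenbaum: assumes "KBdot_consistent \<Gamma>" shows "\<exists>M. \<Gamma> \<subseteq> M \<and> mcs M"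
proof -
  let ?A = "{D. \<Gamma> \<subseteq> D \<and> KBdot_consistent D}"
  have "\<forall>C\<in>chains ?A. \<exists>U\<in>?A. \<forall>X\<in>C. X \<subseteq> U"
  proof
    fix C assume C: "C \<in> chains ?A"
    show "\<exists>U\<in>?A. \<forall>X\<in>C. X \<subseteq> U"
    proof (cases "C = {}")
      case True then show ?thesis using assms by auto
    next
      case False
      have fin: "set xs \<subseteq> \<Union>C \<Longrightarrow> \<exists>Y\<in>C. set xs \<subseteq> Y" for xs
      proof (induct xs)
        case Nil then show ?case using False by auto
      next
        case (Cons x xs)
        then obtain Y1 Y2 where "Y1 \<in> C" "x \<in> Y1" "Y2 \<in> C" "set xs \<subseteq> Y2" by auto
        moreover have "Y1 \<subseteq> Y2 \<or> Y2 \<subseteq> Y1" using C \<open>Y1 \<in> C\<close> \<open>Y2 \<in> C\<close>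
          unfolding chains_def chain_subset_def by blast
        ultimately show ?case by auto
      qed
      have "\<Union>C \<in> ?A"
      proof
        show "\<Gamma> \<subseteq> \<Union>C \<and> KBdot_consistent (\<Union>C)"
        proof
          show "\<Gamma> \<subseteq> \<Union>C" using False C unfolding chains_def by auto
          show "KBdot_consistent (\<Union>C)" unfolding KBdot_consistent_def
          proof (intro allI impI)
            fix xs assume "set xs \<subseteq> \<Union>C"
            then obtain Y where "Y \<in> C" "set xs \<subseteq> Y" using fin by blast
            then show "\<not> KBdot (Neg (conjs xs))" using C unfolding chains_def KBdot_consistent_def by blast
          qed
        qed
      qed
      then show ?thesis by blast
    qed
  qed
  from Zorn_Lemma2[OF this] obtain M where M: "M \<in> ?A" "\<forall>X\<in>?A. M \<subseteq> X \<longrightarrow> X = M" by blast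
  have "mcs M" unfolding mcs_def
  proof (intro conjI allI impI)
    show "KBdot_consistent M" using M by blast
    fix \<phi> assume "KBdot_consistent (insert \<phi> M)"
    then have "insert \<phi> M \<in> ?A" using M by blast
    then have "insert \<phi> M = M" using M by blast
    then show "\<phi> \<in> M" by blast
  qed
  then show ?thesis using M by blast
qed

lemma existence: assumes M: "mcs M" and nd: "Dot \<phi> \<notin> M"
  shows "\<exists>N. mcs N \<and> Rc M N \<and> \<phi> \<in> N"
proof -
  have "KBdot_consistent (insert \<phi> (Bs M))" unfolding KBdot_consistent_def
  proof (intro allI impI notI)
    fix xs assume xs: "set xs \<subseteq> insert \<phi> (Bs M)" and k: "KBdot (Neg (conjs xs))"
    let ?ys = "filter (\<lambda>x. x \<noteq> \<phi>) xs"
    have ys: "set ?ys \<subseteq> Bs M" using xs by auto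
    from B_conjs[OF M nd ys] have d: "Dot (Imp \<phi> (conjs ?ys)) \<in> M" by blast
    have mem: "\<forall>x\<in>set xs. x = \<phi> \<or> x \<in> set ?ys" by auto
    have "KBdot (Iff (Imp \<phi> (conjs ?ys)) (Neg \<phi>))"
    proof (rule KB1[OF k])
      fix g assume "tv g (Neg (conjs xs))"
      then show "tv g (Iff (Imp \<phi> (conjs ?ys)) (Neg \<phi>))" using mem by auto
    qed
    then have "KBdot (Iff (Dot (Imp \<phi> (conjs ?ys))) (Dot (Neg \<phi>)))" by (rule RE)
    then have "Dot (Neg \<phi>) \<in> M" using mcs_iff[OF M] d by blast
    then show False using T2[OF M] nd by blast
  qed
  from lindenbaum[OF this] obtain N where N: "insert \<phi> (Bs M) \<subseteq> N" "mcs N" by blast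
  then show ?thesis unfolding Rc_def using nd by blast
qed

lemma dot_const:
  assumes M: "mcs M" and N: "mcs N" and N': "mcs N'" and r: "Rc M N" "Rc M N'"
    and d: "Dot \<phi> \<in> M" and p: "\<phi> \<in> N"
  shows "\<phi> \<in> N'"
proof -
  from r(1) obtain \<chi> where c: "Dot \<chi> \<notin> M" unfolding Rc_def by blast
  from T4[OF M d, of "Neg \<chi>" "Neg \<chi>"]
  have "Dot (Disj \<phi> (Neg \<chi>)) \<in> M \<or> Dot (Disj (Neg \<phi>) (Neg \<chi>)) \<in> M" .
  then show ?thesis
  proof
    assume "Dot (Disj \<phi> (Neg \<chi>)) \<in> M"
    then have "Dot (Imp \<chi> \<phi>) \<in> M" using eqv[OF M, of "Disj \<phi> (Neg \<chi>)" "Imp \<chi> \<phi>"] by auto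
    then have "\<phi> \<in> Bs M" using c d unfolding Bs_def by blast
    then show ?thesis using r(2) unfolding Rc_def by blast
  next
    assume "Dot (Disj (Neg \<phi>) (Neg \<chi>)) \<in> M"
    then have "Dot (Imp \<chi> (Neg \<phi>)) \<in> M"
      using eqv[OF M, of "Disj (Neg \<phi>) (Neg \<chi>)" "Imp \<chi> (Neg \<phi>)"] by auto
    moreover have "Dot (Neg \<phi>) \<in> M" using T2[OF M] d by blast
    ultimately have "Neg \<phi> \<in> Bs M" using c unfolding Bs_def by blast
    then have "Neg \<phi> \<in> N" using r(1) unfolding Rc_def by blast
    then show ?thesis using mcs_neg[OF N] p by blast
  qed
qed

lemma quasi_sym:
  assumes M: "mcs M" and N: "mcs N" and r: "Rc M N" and n: "\<exists>\<chi>. Dot \<chi> \<notin> N"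
  shows "Rc N M"
  unfolding Rc_def
proof (intro conjI n subsetI)
  fix \<psi> assume "\<psi> \<in> Bs N"
  then obtain \<chi> where c: "Dot \<chi> \<notin> N" "Dot \<psi> \<in> N" "Dot (Imp \<chi> \<psi>) \<in> N" unfolding Bs_def by blast
  show "\<psi> \<in> M"
  proof (rule ccontr)
    assume "\<psi> \<notin> M"
    then have np: "Neg \<psi> \<in> M" using mcs_neg[OF M] by blast
    from r obtain \<chi>1 where c1: "Dot \<chi>1 \<notin> M" unfolding Rc_def by blast
    let ?X = "Conj (Conj (Dot (Neg \<psi>)) (Dot (Imp (Neg \<psi>) \<chi>))) (Neg (Dot \<chi>))"
    have a1: "Dot (Imp ?X (Neg \<chi>1)) \<in> M" using T5[OF M np] .
    have a2: "Dot (Imp ?X (Neg Top)) \<in> M" using T5[OF M np] .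
    have b1: "Dot (Imp \<chi>1 (Neg ?X)) \<in> M" using a1 eqv[OF M, of "Imp ?X (Neg \<chi>1)" "Imp \<chi>1 (Neg ?X)"] by auto
    have b2: "Dot (Neg ?X) \<in> M" using a2 eqv[OF M, of "Imp ?X (Neg Top)" "Neg ?X"] by auto
    have "Neg ?X \<in> Bs M" using b1 b2 c1 unfolding Bs_def by blast
    then have nx: "Neg ?X \<in> N" using r unfolding Rc_def by blast
    have x1: "Dot (Neg \<psi>) \<in> N" using T2[OF N] c(2) by blast
    have "Dot (Imp (Neg \<chi>) \<psi>) \<in> N" using switch[OF N c] .
    then have x2: "Dot (Imp (Neg \<psi>) \<chi>) \<in> N"
      using eqv[OF N, of "Imp (Neg \<chi>) \<psi>" "Imp (Neg \<psi>) \<chi>"] by auto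
    have x3: "Neg (Dot \<chi>) \<in> N" using mcs_neg[OF N] c(1) by blast
    have "?X \<in> N" using x1 x2 x3 mcs_conj[OF N] by blast
    then show False using nx mcs_neg[OF N] by blast
  qed
qed

definition Sc :: "('p fm set \<times> 'p fm set) set" where
  "Sc = {p. mcs (fst p)}"
definition Rcan :: "(('p fm set \<times> 'p fm set) \<times> ('p fm set \<times> 'p fm set)) set" where
  "Rcan = {(p, q). p \<in> Sc \<and> q \<in> Sc \<and> Rc (fst p) (fst q)}"
definition Vc :: "'p \<Rightarrow> ('p fm set \<times> 'p fm set) set" where
  "Vc a = {p \<in> Sc. Atom a \<in> fst p}"

lemma truth: "mcs (fst p) \<Longrightarrow> sat Rcan Rcan Vc p \<phi> \<longleftrightarrow> \<phi> \<in> fst p"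
proof (induct \<phi> arbitrary: p)
  case (Atom x) then show ?case by (simp add: Vc_def Sc_def)
next
  case (Neg \<phi>) then show ?case using mcs_neg by auto
next
  case (Conj \<phi>1 \<phi>2) then show ?case using mcs_conj[of "fst p" \<phi>1 \<phi>2] by simp
next
  case (Dot \<phi>)
  let ?M = "fst p"
  have M: "mcs ?M" by fact
  have eq: "sat Rcan Rcan Vc p (Dot \<phi>) \<longleftrightarrow>
     (\<forall>t u. (p, t) \<in> Rcan \<longrightarrow> (p, u) \<in> Rcan \<longrightarrow> (\<phi> \<in> fst t \<longleftrightarrow> \<phi> \<in> fst u))"
    using Dot.hyps by (auto simp: Rcan_def Sc_def)
  show ?case unfolding eq
  proof
    assume h: "\<forall>t u. (p, t) \<in> Rcan \<longrightarrow> (p, u) \<in> Rcan \<longrightarrow> (\<phi> \<in> fst t \<longleftrightarrow> \<phi> \<in> fst u)"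
    show "Dot \<phi> \<in> ?M"
    proof (rule ccontr)
      assume nd: "Dot \<phi> \<notin> ?M"
      obtain N1 where N1: "mcs N1" "Rc ?M N1" "\<phi> \<in> N1" using existence[OF M nd] by blast
      have "Dot (Neg \<phi>) \<notin> ?M" using T2[OF M] nd by blast
      then obtain N2 where N2: "mcs N2" "Rc ?M N2" "Neg \<phi> \<in> N2" using existence[OF M] by blast
      have "(p, (N1, {})) \<in> Rcan" "(p, (N2, {})) \<in> Rcan" using M N1 N2 by (auto simp: Rcan_def Sc_def)
      then have "\<phi> \<in> N2" using h N1(3) by fastforce
      then show False using N2 mcs_neg by blast
    qed
  next
    assume d: "Dot \<phi> \<in> ?M"
    show "\<forall>t u. (p, t) \<in> Rcan \<longrightarrow> (p, u) \<in> Rcan \<longrightarrow> (\<phi> \<in> fst t \<longleftrightarrow> \<phi> \<in> fst u)"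
      using dot_const[OF M _ _ _ _ d] by (auto simp: Rcan_def Sc_def)
  qed
qed

theorem mainTheorem14:
  fixes \<Gamma> :: "'p fm set"
  assumes "KBdot_consistent \<Gamma>"
  shows "\<exists>(S :: ('p fm set \<times> 'p fm set) set) R1 R2 V s.
           bimodal_model S R1 R2 V \<and> quasi_symmetric S R1 R2 \<and> s \<in> S \<and>
           (\<forall>\<phi>\<in>\<Gamma>. sat R1 R2 V s \<phi>)"
proof -
  obtain M where M: "\<Gamma> \<subseteq> M" "mcs M" using lindenbaum[OF assms] by blast
  have s: "(M, {}) \<in> (Sc :: ('p fm set \<times> 'p fm set) set)" using M by (simp add: Sc_def)
  have bm: "bimodal_model (Sc :: ('p fm set \<times> 'p fm set) set) Rcan Rcan Vc"
    unfolding bimodal_model_def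
  proof (intro conjI)
    show "(Sc :: ('p fm set \<times> 'p fm set) set) \<noteq> {}" using s by blast
  qed (auto simp: Rcan_def Vc_def)
  have qs: "quasi_symmetric (Sc :: ('p fm set \<times> 'p fm set) set) Rcan Rcan"
    unfolding quasi_symmetric_def
  proof (intro ballI impI)
    fix Ri Rj s t assume ri: "Ri \<in> {Rcan, Rcan}" and rj: "Rj \<in> {Rcan, Rcan}"
      and st: "s \<in> Sc" "t \<in> Sc" and ex: "\<exists>u\<in>Sc. (t, u) \<in> Rj" and e: "(s, t) \<in> Ri"
    from ex rj have "\<exists>\<chi>. Dot \<chi> \<notin> fst t" by (auto simp: Rcan_def Rc_def)
    moreover have "Rc (fst s) (fst t)" using e ri by (auto simp: Rcan_def)
    ultimately have "Rc (fst t) (fst s)" using quasi_sym st by (auto simp: Sc_def)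
    then show "(t, s) \<in> Ri" using ri st by (auto simp: Rcan_def)
  qed
  have "\<forall>\<phi>\<in>\<Gamma>. sat Rcan Rcan Vc (M, {}) \<phi>" using truth[of "(M, {})"] M by auto
  then show ?thesis using bm qs s by blast
qed

end
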